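(* Let $R\ge0$ and let $X$ be an $R$-rough geodesic metric space that is asymptotically $\mathrm{CAT}(0)$. Then $X$ is strongly shortcut.
   Context: A metric space is asymptotically $\mathrm{CAT}(0)$ if every asymptotic cone of it is $\mathrm{CAT}(0)$. Asymptotic cone: for a nonprincipal ultrafilter $\mathscr U$ on $\mathbb N$, basepoints $b^{(m)}\in X$ and scalars $s^{(m)}\to\infty$, take sequences $(x_m)$ with $d(x_m,b^{(m)})/s^{(m)}$ bounded, pseudometric $\lim_{\mathscr U} d(x_m,x'_m)/s^{(m)}$, and pass to the metric quotient. $X$ is $R$-rough geodesic if any $x_1,x_2$ are joined by $f\colon[0,\ell]\to X$, $\ell=d(x_1,x_2)$, $f(0)=x_1,f(\ell)=x_2$, with $|d(f(s),f(t))-|s-t||\le R$. An $R$-circle is a map $\alpha\colon S\to X$ from a Riemannian circle $S$ of length $|S|$ with $d(\alpha(p),\alpha(q))\le d_S(p,q)+R$; for $K>1$ it is $\frac1K$-almost isometric if $d(\alpha(p),\alpha(\bar p))\ge\frac1K\cdot\frac{|S|}2$ for all antipodal $p,\bar p\in S$. $X$ is strongly shortcut if for some $K>1$ there is a bound on the lengths of the $\frac1K$-almost isometric $R$-circles in $X$. *)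

theory Defs
  imports "HOL-Analysis.Analysis"
begin

definition geodesic_between :: "'b set \<Rightarrow> ('b \<Rightarrow> 'b \<Rightarrow> real) \<Rightarrow> 'b \<Rightarrow> 'b \<Rightarrow> (real \<Rightarrow> 'b) \<Rightarrow> bool" where
  "geodesic_between M d x y g \<longleftrightarrow>
     g ` {0..d x y} \<subseteq> M \<and> g 0 = x \<and> g (d x y) = y \<and>
     (\<forall>s\<in>{0..d x y}. \<forall>t\<in>{0..d x y}. d (g s) (g t) = \<bar>s - t\<bar>)"

definition geodesic_space :: "'b set \<Rightarrow> ('b \<Rightarrow> 'b \<Rightarrow> real) \<Rightarrow> bool" where
  "geodesic_space M d \<longleftrightarrow> (\<forall>x\<in>M. \<forall>y\<in>M. \<exists>g. geodesic_between M d x y g)"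

definition cmp_pt :: "real^2 \<Rightarrow> real^2 \<Rightarrow> real \<Rightarrow> real \<Rightarrow> real^2" where
  "cmp_pt a b l s = a + (if l = 0 then 0 else s / l) *\<^sub>R (b - a)"

definition CAT0_triangle_ineq ::
  "('b \<Rightarrow> 'b \<Rightarrow> real) \<Rightarrow> 'b \<Rightarrow> 'b \<Rightarrow> 'b \<Rightarrow> (real \<Rightarrow> 'b) \<Rightarrow> (real \<Rightarrow> 'b) \<Rightarrow> (real \<Rightarrow> 'b)
     \<Rightarrow> real^2 \<Rightarrow> real^2 \<Rightarrow> real^2 \<Rightarrow> bool" where
  "CAT0_triangle_ineq d x y z g1 g2 g3 xa ya za \<longleftrightarrow>
     (let sides = {(g1, xa, ya, d x y), (g2, ya, za, d y z), (g3, za, xa, d z x)} in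
      \<forall>(c1, a1, b1, l1)\<in>sides. \<forall>(c2, a2, b2, l2)\<in>sides.
        \<forall>s\<in>{0..l1}. \<forall>t\<in>{0..l2}.
          d (c1 s) (c2 t) \<le> dist (cmp_pt a1 b1 l1 s) (cmp_pt a2 b2 l2 t))"

definition CAT0 :: "'b set \<Rightarrow> ('b \<Rightarrow> 'b \<Rightarrow> real) \<Rightarrow> bool" where
  "CAT0 M d \<longleftrightarrow> geodesic_space M d \<and>
     (\<forall>x\<in>M. \<forall>y\<in>M. \<forall>z\<in>M. \<forall>g1 g2 g3.
        geodesic_between M d x y g1 \<and> geodesic_between M d y z g2 \<and> geodesic_between M d z x g3 \<longrightarrow>
        (\<forall>xa ya za. dist xa ya = d x y \<and> dist ya za = d y z \<and> dist za xa = d z x \<longrightarrow>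
           CAT0_triangle_ineq d x y z g1 g2 g3 xa ya za))"

definition nonprincipal_ultrafilter :: "nat filter \<Rightarrow> bool" where
  "nonprincipal_ultrafilter U \<longleftrightarrow> U \<noteq> bot \<and>
     (\<forall>P. eventually P U \<or> eventually (\<lambda>m. \<not> P m) U) \<and>
     (\<forall>n. eventually (\<lambda>m. m \<noteq> n) U)"

definition cone_seqs :: "(nat \<Rightarrow> 'a::metric_space) \<Rightarrow> (nat \<Rightarrow> real) \<Rightarrow> (nat \<Rightarrow> 'a) set" where
  "cone_seqs b s = {x. bounded (range (\<lambda>m. dist (x m) (b m) / s m))}"

definition cone_pdist :: "nat filter \<Rightarrow> (nat \<Rightarrow> real) \<Rightarrow> (nat \<Rightarrow> 'a::metric_space) \<Rightarrow> (nat \<Rightarrow> 'a) \<Rightarrow> real" where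
  "cone_pdist U s x y = Lim U (\<lambda>m. dist (x m) (y m) / s m)"

definition cone_carrier :: "nat filter \<Rightarrow> (nat \<Rightarrow> 'a::metric_space) \<Rightarrow> (nat \<Rightarrow> real) \<Rightarrow> (nat \<Rightarrow> 'a) set set" where
  "cone_carrier U b s = (\<lambda>x. {y \<in> cone_seqs b s. cone_pdist U s x y = 0}) ` cone_seqs b s"

definition cone_dist :: "nat filter \<Rightarrow> (nat \<Rightarrow> real) \<Rightarrow> (nat \<Rightarrow> 'a::metric_space) set \<Rightarrow> (nat \<Rightarrow> 'a) set \<Rightarrow> real" where
  "cone_dist U s A B = cone_pdist U s (SOME x. x \<in> A) (SOME y. y \<in> B)"

definition asymptotically_CAT0 :: "'a::metric_space itself \<Rightarrow> bool" where
  "asymptotically_CAT0 _ \<longleftrightarrow>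
     (\<forall>U (b :: nat \<Rightarrow> 'a) (s :: nat \<Rightarrow> real).
        nonprincipal_ultrafilter U \<and> filterlim s at_top sequentially \<longrightarrow>
        CAT0 (cone_carrier U b s) (cone_dist U s))"

definition rough_geodesic :: "real \<Rightarrow> 'a::metric_space itself \<Rightarrow> bool" where
  "rough_geodesic R _ \<longleftrightarrow>
     (\<forall>x1 x2 :: 'a. \<exists>f :: real \<Rightarrow> 'a. f 0 = x1 \<and> f (dist x1 x2) = x2 \<and>
        (\<forall>s\<in>{0..dist x1 x2}. \<forall>t\<in>{0..dist x1 x2}. \<bar>dist (f s) (f t) - \<bar>s - t\<bar>\<bar> \<le> R))"

text \<open>Riemannian circle of length L > 0 modelled as R/LZ; a map from it is an L-periodic
  function on the reals. Intrinsic distance on the circle:\<close>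
definition circ_dist :: "real \<Rightarrow> real \<Rightarrow> real \<Rightarrow> real" where
  "circ_dist L p q = (INF k::int. \<bar>p - q - of_int k * L\<bar>)"

definition R_circle :: "real \<Rightarrow> real \<Rightarrow> (real \<Rightarrow> 'a::metric_space) \<Rightarrow> bool" where
  "R_circle R L \<alpha> \<longleftrightarrow> L > 0 \<and> (\<forall>p. \<alpha> (p + L) = \<alpha> p) \<and>
     (\<forall>p q. dist (\<alpha> p) (\<alpha> q) \<le> circ_dist L p q + R)"

definition almost_isometric :: "real \<Rightarrow> real \<Rightarrow> (real \<Rightarrow> 'a::metric_space) \<Rightarrow> bool" where
  "almost_isometric K L \<alpha> \<longleftrightarrow> (\<forall>p. dist (\<alpha> p) (\<alpha> (p + L / 2)) \<ge> (1 / K) * (L / 2))"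

definition strongly_shortcut :: "'a::metric_space itself \<Rightarrow> bool" where
  "strongly_shortcut _ \<longleftrightarrow>
     (\<exists>K > 1. \<forall>R \<ge> 0. \<exists>B. \<forall>L (\<alpha> :: real \<Rightarrow> 'a).
        R_circle R L \<alpha> \<and> almost_isometric K L \<alpha> \<longrightarrow> L \<le> B)"

end

theory Submission
  imports Defs
begin

definition filt_fam :: "(nat \<Rightarrow> bool) set set" where
  "filt_fam = {E. (\<lambda>x. True) \<in> E \<and> (\<forall>P\<in>E. \<forall>Q\<in>E. (\<lambda>x. P x \<and> Q x) \<in> E) \<and>
     (\<forall>P Q. (\<forall>x. P x \<longrightarrow> Q x) \<longrightarrow> P \<in> E \<longrightarrow> Q \<in> E) \<and> (\<lambda>x. False) \<notin> E \<and>
     (\<forall>n. (\<lambda>m. m \<noteq> n) \<in> E)}"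

lemma ex_max_fam: "\<exists>M\<in>filt_fam. \<forall>X\<in>filt_fam. M \<subseteq> X \<longrightarrow> X = M"
proof (rule subset_Zorn_nonempty)
  have "{P. eventually P sequentially} \<in> filt_fam"
    unfolding filt_fam_def
    by (auto intro: eventually_conj eventually_mono eventually_sequentiallyI[of "Suc _"])
  then show "filt_fam \<noteq> {}" by blast
next
  fix C assume ne: "C \<noteq> {}" and ch: "subset.chain filt_fam C"
  then have sub: "C \<subseteq> filt_fam" and cmp: "\<forall>X\<in>C. \<forall>Y\<in>C. X \<subseteq> Y \<or> Y \<subseteq> X"
    by (auto simp: subset_chain_def)
  show "\<Union>C \<in> filt_fam"
    unfolding filt_fam_def
  proof (intro CollectI conjI allI ballI impI)
    show "(\<lambda>x. True) \<in> \<Union>C" using ne sub by (auto simp: filt_fam_def)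
    show "(\<lambda>x. False) \<notin> \<Union>C" using sub by (auto simp: filt_fam_def)
    fix n show "(\<lambda>m. m \<noteq> n) \<in> \<Union>C" using ne sub by (auto simp: filt_fam_def)
  next
    fix P Q assume "P \<in> \<Union>C" "Q \<in> \<Union>C"
    then obtain X Y where XY: "X \<in> C" "Y \<in> C" "P \<in> X" "Q \<in> Y" by blast
    have XF: "X \<in> filt_fam" and YF: "Y \<in> filt_fam" using sub XY by auto
    have "X \<subseteq> Y \<or> Y \<subseteq> X" using cmp XY by blast
    then have "(\<lambda>x. P x \<and> Q x) \<in> X \<union> Y"
    proof
      assume "X \<subseteq> Y" then show ?thesis using YF XY unfolding filt_fam_def by blast
    next
      assume "Y \<subseteq> X" then show ?thesis using XF XY unfolding filt_fam_def by blast
    qed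
    then show "(\<lambda>x. P x \<and> Q x) \<in> \<Union>C" using XY by blast
  next
    fix P Q assume "\<forall>x. P x \<longrightarrow> Q x" "P \<in> \<Union>C"
    then show "Q \<in> \<Union>C" using sub unfolding filt_fam_def by blast
  qed
qed

lemma ex_npu: "\<exists>U. nonprincipal_ultrafilter U"
proof -
  obtain M where M: "M \<in> filt_fam" and mx: "\<forall>X\<in>filt_fam. M \<subseteq> X \<longrightarrow> X = M"
    using ex_max_fam by blast
  have Mt: "(\<lambda>x. True) \<in> M" using M unfolding filt_fam_def by simp
  have Mc: "\<And>A B. A \<in> M \<Longrightarrow> B \<in> M \<Longrightarrow> (\<lambda>x. A x \<and> B x) \<in> M" using M unfolding filt_fam_def by simp
  have Mu: "\<And>A B. (\<forall>x. A x \<longrightarrow> B x) \<Longrightarrow> A \<in> M \<Longrightarrow> B \<in> M"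
  proof -
    fix A B assume "\<forall>x. A x \<longrightarrow> B x" "A \<in> M"
    moreover have "\<forall>P Q. (\<forall>x. P x \<longrightarrow> Q x) \<longrightarrow> P \<in> M \<longrightarrow> Q \<in> M" using M unfolding filt_fam_def by simp
    ultimately show "B \<in> M" by blast
  qed
  have Mf: "(\<lambda>x. False) \<notin> M" using M unfolding filt_fam_def by simp
  have Mn: "\<And>n. (\<lambda>m. m \<noteq> n) \<in> M" using M unfolding filt_fam_def by simp
  have isf: "is_filter (\<lambda>P. P \<in> M)"
    by (rule is_filter.intro) (auto intro: Mt Mc Mu)
  define U where "U = Abs_filter (\<lambda>P. P \<in> M)"
  have ev: "eventually P U \<longleftrightarrow> P \<in> M" for P
    unfolding U_def using eventually_Abs_filter[OF isf] by simp
  have ultra: "P \<in> M \<or> (\<lambda>m. \<not> P m) \<in> M" for P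
  proof (cases "\<forall>E\<in>M. \<exists>x. E x \<and> P x")
    case True
    define M' where "M' = {Q. \<exists>E\<in>M. \<forall>x. E x \<and> P x \<longrightarrow> Q x}"
    have inM': "Q \<in> M'" if "E \<in> M" "\<forall>x. E x \<and> P x \<longrightarrow> Q x" for E Q
      unfolding M'_def using that by blast
    have "M' \<in> filt_fam"
      unfolding filt_fam_def
    proof (intro CollectI conjI allI ballI impI)
      show "(\<lambda>x. True) \<in> M'" by (rule inM'[OF Mt]) simp
      show "(\<lambda>x. False) \<notin> M'"
      proof
        assume "(\<lambda>x. False) \<in> M'"
        then obtain E where E: "E \<in> M" "\<forall>x. E x \<and> P x \<longrightarrow> False" unfolding M'_def by auto
        from True E(1) obtain y where "E y \<and> P y" by blast
        with E(2) show False by blast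
      qed
      fix n show "(\<lambda>m. m \<noteq> n) \<in> M'" by (rule inM'[OF Mn[of n]]) simp
    next
      fix A B assume "A \<in> M'" "B \<in> M'"
      then obtain E1 E2 where E: "E1 \<in> M" "E2 \<in> M" "\<forall>x. E1 x \<and> P x \<longrightarrow> A x" "\<forall>x. E2 x \<and> P x \<longrightarrow> B x"
        unfolding M'_def by blast
      show "(\<lambda>x. A x \<and> B x) \<in> M'"
        by (rule inM'[OF Mc[OF E(1) E(2)]]) (use E(3,4) in blast)
    next
      fix A B assume AB: "\<forall>x. A x \<longrightarrow> B x" and "A \<in> M'"
      then obtain E where E: "E \<in> M" "\<forall>x. E x \<and> P x \<longrightarrow> A x" unfolding M'_def by blast
      show "B \<in> M'" by (rule inM'[OF E(1)]) (use E(2) AB in blast)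
    qed
    moreover have "M \<subseteq> M'"
    proof
      fix Q assume "Q \<in> M" then show "Q \<in> M'" by (rule inM') simp
    qed
    ultimately have "M' = M" using mx by blast
    moreover have "P \<in> M'" by (rule inM'[OF Mt]) simp
    ultimately show ?thesis by simp
  next
    case False
    then obtain E where "E \<in> M" "\<forall>x. E x \<longrightarrow> \<not> P x" by blast
    then have "(\<lambda>m. \<not> P m) \<in> M" using Mu[of E "\<lambda>m. \<not> P m"] by blast
    then show ?thesis by simp
  qed
  have "U \<noteq> bot"
    using Mf ev by (metis eventually_bot)
  moreover have "\<forall>n. eventually (\<lambda>m. m \<noteq> n) U" using Mn ev by blast
  ultimately show ?thesis unfolding nonprincipal_ultrafilter_def using ultra ev by blast
qed


lemma npu_le_seq: assumes "nonprincipal_ultrafilter U" shows "U \<le> sequentially"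
proof -
  have "eventually (\<lambda>n. N \<le> n) U" for N
  proof (induction N)
    case 0 then show ?case by simp
  next
    case (Suc N)
    have "eventually (\<lambda>m. m \<noteq> N) U" using assms unfolding nonprincipal_ultrafilter_def by blast
    with Suc show ?case by eventually_elim auto
  qed
  then show ?thesis by (simp add: le_sequentially)
qed

lemma npu_lim:
  fixes f :: "nat \<Rightarrow> real"
  assumes U: "nonprincipal_ultrafilter U" and b: "bounded (range f)"
  shows "(f \<longlongrightarrow> Lim U f) U"
proof -
  have nb: "U \<noteq> bot" using U unfolding nonprincipal_ultrafilter_def by blast
  obtain B where B: "\<And>m. norm (f m) \<le> B" using b unfolding bounded_iff by blast
  have "compact (cball (0::real) B)" by simp
  moreover have "filtermap f U \<noteq> bot" using nb by (simp add: filtermap_bot_iff)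
  moreover have "eventually (\<lambda>x. x \<in> cball 0 B) (filtermap f U)"
    using B by (simp add: eventually_filtermap)
  ultimately obtain l where l: "inf (nhds l) (filtermap f U) \<noteq> bot"
    unfolding compact_filter by blast
  have "(f \<longlongrightarrow> l) U"
    unfolding tendsto_def
  proof (intro allI impI)
    fix S :: "real set" assume S: "open S" "l \<in> S"
    show "eventually (\<lambda>m. f m \<in> S) U"
    proof (rule ccontr)
      assume "\<not> eventually (\<lambda>m. f m \<in> S) U"
      then have "eventually (\<lambda>m. \<not> f m \<in> S) U" using U unfolding nonprincipal_ultrafilter_def by blast
      then have e1: "eventually (\<lambda>x. x \<notin> S) (filtermap f U)" by (simp add: eventually_filtermap)
      have e2: "eventually (\<lambda>x. x \<in> S) (nhds l)" using S eventually_nhds by blast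
      have "eventually (\<lambda>x. False) (inf (nhds l) (filtermap f U))"
        unfolding eventually_inf using e1 e2 by blast
      then show False using l by (simp add: eventually_False)
    qed
  qed
  then show ?thesis using tendsto_Lim nb by metis
qed

lemma circ_le: "circ_dist L p q \<le> \<bar>p - q\<bar>"
proof -
  have "bdd_below (range (\<lambda>k::int. \<bar>p - q - of_int k * L\<bar>))"
    by (rule bdd_belowI[where m=0]) auto
  then have "circ_dist L p q \<le> \<bar>p - q - of_int 0 * L\<bar>"
    unfolding circ_dist_def by (rule cINF_lower) simp
  then show ?thesis by simp
qed

context
  fixes U :: "nat filter" and s :: "nat \<Rightarrow> real" and b :: "nat \<Rightarrow> 'a::metric_space"
  assumes U: "nonprincipal_ultrafilter U" and s: "filterlim s at_top sequentially"
begin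

lemma nbU: "U \<noteq> bot" using U unfolding nonprincipal_ultrafilter_def by blast

lemma ev_spos: "eventually (\<lambda>m. s m > 0) U"
proof -
  have "eventually (\<lambda>m. s m > 0) sequentially" using s by (simp add: filterlim_at_top_dense)
  then show ?thesis by (rule filter_leD[OF npu_le_seq[OF U]])
qed

lemma cs_bounded:
  assumes "y \<in> cone_seqs b s" "z \<in> cone_seqs b s"
  shows "bounded (range (\<lambda>m. dist (y m) (z m) / s m))"
proof -
  obtain B1 where B1: "\<And>m. norm (dist (y m) (b m) / s m) \<le> B1"
    using assms(1) unfolding cone_seqs_def bounded_iff by blast
  obtain B2 where B2: "\<And>m. norm (dist (z m) (b m) / s m) \<le> B2"
    using assms(2) unfolding cone_seqs_def bounded_iff by blast
  have "norm (dist (y m) (z m) / s m) \<le> B1 + B2" for m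
  proof -
    have "norm (dist (y m) (z m) / s m) = dist (y m) (z m) / \<bar>s m\<bar>" by simp
    also have "\<dots> \<le> (dist (y m) (b m) + dist (z m) (b m)) / \<bar>s m\<bar>"
      by (intro divide_right_mono) (auto intro: dist_triangle3[of "y m" "z m" "b m", simplified dist_commute] simp: dist_commute dist_triangle2)
    also have "\<dots> = norm (dist (y m) (b m) / s m) + norm (dist (z m) (b m) / s m)"
      by (simp add: add_divide_distrib)
    also have "\<dots> \<le> B1 + B2" using B1 B2 by (intro add_mono)
    finally show ?thesis .
  qed
  then show ?thesis unfolding bounded_iff by blast
qed

lemma cs_tendsto:
  assumes "y \<in> cone_seqs b s" "z \<in> cone_seqs b s"
  shows "((\<lambda>m. dist (y m) (z m) / s m) \<longlongrightarrow> cone_pdist U s y z) U"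
  unfolding cone_pdist_def by (rule npu_lim[OF U cs_bounded[OF assms]])

lemma cs_tri:
  assumes "y \<in> cone_seqs b s" "z \<in> cone_seqs b s" "w \<in> cone_seqs b s"
  shows "cone_pdist U s y w \<le> cone_pdist U s y z + cone_pdist U s z w"
proof (rule tendsto_le[OF nbU])
  show "((\<lambda>m. dist (y m) (z m) / s m + dist (z m) (w m) / s m) \<longlongrightarrow> cone_pdist U s y z + cone_pdist U s z w) U"
    by (intro tendsto_add cs_tendsto assms)
  show "((\<lambda>m. dist (y m) (w m) / s m) \<longlongrightarrow> cone_pdist U s y w) U"
    by (intro cs_tendsto assms)
  show "eventually (\<lambda>m. dist (y m) (w m) / s m \<le> dist (y m) (z m) / s m + dist (z m) (w m) / s m) U"
    using ev_spos
  proof eventually_elim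
    case (elim m)
    then show ?case
      by (simp add: add_divide_distrib[symmetric] divide_right_mono dist_triangle)
  qed
qed

lemma cs_sym: "cone_pdist U s y z = cone_pdist U s z y"
  unfolding cone_pdist_def by (simp add: dist_commute)

lemma cs_refl: "cone_pdist U s y y = 0"
  unfolding cone_pdist_def using tendsto_Lim[OF _ tendsto_const] nbU by simp

lemma cs_dist:
  assumes y: "y \<in> cone_seqs b s" and z: "z \<in> cone_seqs b s"
  shows "cone_dist U s {w \<in> cone_seqs b s. cone_pdist U s y w = 0} {w \<in> cone_seqs b s. cone_pdist U s z w = 0}
     = cone_pdist U s y z"
proof -
  let ?A = "{w \<in> cone_seqs b s. cone_pdist U s y w = 0}"
  let ?B = "{w \<in> cone_seqs b s. cone_pdist U s z w = 0}"
  have yA: "y \<in> ?A" using y cs_refl[of y] by simp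
  have zB: "z \<in> ?B" using z cs_refl[of z] by simp
  define y' where "y' = (SOME w. w \<in> ?A)"
  define z' where "z' = (SOME w. w \<in> ?B)"
  have "y' \<in> ?A" unfolding y'_def by (rule someI[where P="\<lambda>w. w \<in> ?A", OF yA])
  then have y': "y' \<in> cone_seqs b s" "cone_pdist U s y y' = 0" by simp_all
  have "z' \<in> ?B" unfolding z'_def by (rule someI[where P="\<lambda>w. w \<in> ?B", OF zB])
  then have z': "z' \<in> cone_seqs b s" "cone_pdist U s z z' = 0" by simp_all
  have "cone_pdist U s y' z' \<le> cone_pdist U s y' y + cone_pdist U s y z'" by (rule cs_tri; fact)
  moreover have "cone_pdist U s y z' \<le> cone_pdist U s y z + cone_pdist U s z z'" by (rule cs_tri; fact)
  moreover have "cone_pdist U s y z \<le> cone_pdist U s y y' + cone_pdist U s y' z" by (rule cs_tri; fact)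
  moreover have "cone_pdist U s y' z \<le> cone_pdist U s y' z' + cone_pdist U s z' z" by (rule cs_tri; fact)
  ultimately have "cone_pdist U s y' z' = cone_pdist U s y z"
    using y' z' cs_sym[of y y'] cs_sym[of z z'] by linarith
  then show ?thesis unfolding cone_dist_def y'_def z'_def .
qed

end


lemma lim2: "(\<lambda>m::nat. 1 / (real m + 1)) \<longlonglongrightarrow> 0"
  using LIMSEQ_inverse_real_of_nat by (simp add: inverse_eq_divide add.commute)

lemma lim1: "(\<lambda>m::nat. 1 / (1 + 1 / (real m + 1)) * (1/2)) \<longlonglongrightarrow> 1/2"
proof -
  have "(\<lambda>m::nat. 1 / (1 + 1 / (real m + 1)) * (1/2)) \<longlonglongrightarrow> 1 / (1 + 0) * (1/2)"
    by (intro tendsto_intros lim2) simp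
  then show ?thesis by simp
qed

theorem theorem6p1:
  fixes R :: real
  assumes "R \<ge> 0"
    and "rough_geodesic R TYPE('a::metric_space)"
    and "asymptotically_CAT0 TYPE('a)"
  shows "strongly_shortcut TYPE('a)"
proof (rule ccontr)
  assume ns: "\<not> strongly_shortcut TYPE('a)"
  define Kf where "Kf n = 1 + 1 / (real n + 1)" for n :: nat
  have "\<forall>n. \<exists>q::real \<times> real \<times> (real \<Rightarrow> 'a). fst q \<ge> 0 \<and> R_circle (fst q) (fst (snd q)) (snd (snd q)) \<and>
      almost_isometric (Kf n) (fst (snd q)) (snd (snd q)) \<and> fst (snd q) > (real n + 1) * (fst q + 1)"
  proof
    fix n
    have "Kf n > 1" unfolding Kf_def by simp
    then obtain R' where R': "R' \<ge> 0" "\<forall>B. \<exists>L (\<alpha>::real \<Rightarrow> 'a). R_circle R' L \<alpha> \<and> almost_isometric (Kf n) L \<alpha> \<and> L > B"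
      using ns unfolding strongly_shortcut_def by (meson not_le)
    then obtain L \<alpha> where "R_circle R' L (\<alpha>::real\<Rightarrow>'a)" "almost_isometric (Kf n) L \<alpha>" "L > (real n + 1) * (R' + 1)"
      by blast
    then show "\<exists>q::real \<times> real \<times> (real \<Rightarrow> 'a). fst q \<ge> 0 \<and> R_circle (fst q) (fst (snd q)) (snd (snd q)) \<and>
      almost_isometric (Kf n) (fst (snd q)) (snd (snd q)) \<and> fst (snd q) > (real n + 1) * (fst q + 1)"
      using R' by (intro exI[of _ "(R', L, \<alpha>)"]) simp
  qed
  then have "\<exists>q::nat \<Rightarrow> real \<times> real \<times> (real \<Rightarrow> 'a). \<forall>n. fst (q n) \<ge> 0 \<and> R_circle (fst (q n)) (fst (snd (q n))) (snd (snd (q n))) \<and>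
      almost_isometric (Kf n) (fst (snd (q n))) (snd (snd (q n))) \<and> fst (snd (q n)) > (real n + 1) * (fst (q n) + 1)"
    by (rule choice)
  then obtain q :: "nat \<Rightarrow> real \<times> real \<times> (real \<Rightarrow> 'a)" where q: "\<And>n. fst (q n) \<ge> 0 \<and> R_circle (fst (q n)) (fst (snd (q n))) (snd (snd (q n))) \<and>
      almost_isometric (Kf n) (fst (snd (q n))) (snd (snd (q n))) \<and> fst (snd (q n)) > (real n + 1) * (fst (q n) + 1)"
    by blast
  define Rr where "Rr n = fst (q n)" for n
  define L where "L n = fst (snd (q n))" for n
  define \<alpha> where "\<alpha> n = snd (snd (q n))" for n
  have Rr0: "Rr n \<ge> 0" for n using q unfolding Rr_def by blast
  have circ: "R_circle (Rr n) (L n) (\<alpha> n)" for n using q unfolding Rr_def L_def \<alpha>_def by blast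
  have ai: "almost_isometric (Kf n) (L n) (\<alpha> n)" for n using q unfolding Rr_def L_def \<alpha>_def by blast
  have Lbig: "L n > (real n + 1) * (Rr n + 1)" for n using q unfolding Rr_def L_def \<alpha>_def by blast
  have Lpos: "L n > 0" for n
    using Lbig[of n] Rr0[of n] by (smt (verit) mult_nonneg_nonneg of_nat_0_le_iff)
  have Lge: "L n \<ge> real n" for n
  proof -
    have "(real n + 1) * 1 \<le> (real n + 1) * (Rr n + 1)" using Rr0[of n] by (intro mult_left_mono) auto
    then have "real n + 1 \<le> (real n + 1) * (Rr n + 1)" by simp
    then have "real n + 1 < L n" using Lbig[of n] by (rule le_less_trans)
    then show ?thesis by simp
  qed
  have RL: "Rr n / L n \<le> 1 / (real n + 1)" for n
  proof -
    have "(real n + 1) * Rr n \<le> L n" using Lbig[of n] Rr0[of n] by (simp add: algebra_simps)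
    then show ?thesis using Lpos[of n] by (simp add: field_simps)
  qed
  have RL0: "Rr n / L n \<ge> 0" for n using Rr0[of n] Lpos[of n] by simp
  have Llim: "filterlim L at_top sequentially"
    by (rule filterlim_at_top_mono[OF filterlim_real_sequentially]) (simp add: Lge)
  obtain U where U: "nonprincipal_ultrafilter U" using ex_npu by blast
  have nb: "U \<noteq> bot" using U unfolding nonprincipal_ultrafilter_def by (rule conjunct1)
  have RLlim: "((\<lambda>m. Rr m / L m) \<longlongrightarrow> 0) U"
  proof -
    have "(\<lambda>m. Rr m / L m) \<longlonglongrightarrow> 0"
      by (rule tendsto_sandwich[OF _ _ tendsto_const lim2]) (simp_all add: RL0 RL)
    then show ?thesis using npu_le_seq[OF U] by (rule tendsto_mono[rotated])
  qed
  have Klim: "((\<lambda>m. 1 / Kf m * (1/2)) \<longlongrightarrow> 1/2) U"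
    using lim1 npu_le_seq[OF U] unfolding Kf_def by (rule tendsto_mono[rotated])
  define x where "x t = (\<lambda>m. \<alpha> m (t * L m))" for t
  define r where "r t u m = dist (x t m) (x u m) / L m" for t u m
  have r_le: "r t u m \<le> \<bar>t - u\<bar> + Rr m / L m" for t u m
  proof -
    have "dist (x t m) (x u m) \<le> circ_dist (L m) (t * L m) (u * L m) + Rr m"
      using circ[of m] unfolding R_circle_def x_def by blast
    also have "\<dots> \<le> \<bar>t * L m - u * L m\<bar> + Rr m" using circ_le by simp
    also have "\<dots> = \<bar>t - u\<bar> * L m + Rr m" using Lpos[of m] by (simp add: abs_mult left_diff_distrib[symmetric])
    finally show ?thesis unfolding r_def using Lpos[of m] by (simp add: field_simps)
  qed
  have r_ge0: "r t u m \<ge> 0" for t u m unfolding r_def using Lpos[of m] by simp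
  have r_anti: "r p (p + 1/2) m \<ge> 1 / Kf m * (1/2)" for p m
  proof -
    have "dist (\<alpha> m (p * L m)) (\<alpha> m (p * L m + L m / 2)) \<ge> 1 / Kf m * (L m / 2)"
      using ai[of m] unfolding almost_isometric_def by blast
    moreover have "p * L m + L m / 2 = (p + 1/2) * L m" by (simp add: algebra_simps)
    ultimately have "dist (x p m) (x (p + 1/2) m) \<ge> 1 / Kf m * (L m / 2)" unfolding x_def by simp
    then show ?thesis unfolding r_def using Lpos[of m] by (simp add: field_simps)
  qed
  have x10: "x 1 = x 0"
  proof
    fix m
    have "\<alpha> m (0 + L m) = \<alpha> m 0" using circ[of m] unfolding R_circle_def by blast
    then show "x 1 m = x 0 m" unfolding x_def by simp
  qed
  have xcs: "x t \<in> cone_seqs (x 0) L" for t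
  proof -
    have "norm (dist (x t m) (x 0 m) / L m) \<le> \<bar>t\<bar> + 1" for m
    proof -
      have "norm (dist (x t m) (x 0 m) / L m) = r t 0 m" unfolding r_def using Lpos[of m] by simp
      also have "\<dots> \<le> \<bar>t\<bar> + 1" using r_le[of t 0 m] RL[of m] by (smt (verit) divide_le_eq_1 of_nat_0_le_iff)
      finally show ?thesis .
    qed
    then show ?thesis unfolding cone_seqs_def bounded_iff by blast
  qed
  define D where "D t u = cone_pdist U L (x t) (x u)" for t u
  have Dlim: "(r t u \<longlongrightarrow> D t u) U" for t u
    unfolding D_def r_def[abs_def] using cs_tendsto[OF U Llim xcs xcs] by simp
  have D_le: "D t u \<le> \<bar>t - u\<bar>" for t u
  proof (rule tendsto_le[OF nb])
    show "((\<lambda>m. \<bar>t - u\<bar> + Rr m / L m) \<longlongrightarrow> \<bar>t - u\<bar>) U"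
      using tendsto_add[OF tendsto_const RLlim] by simp
    show "(r t u \<longlongrightarrow> D t u) U" by (rule Dlim)
    show "eventually (\<lambda>m. r t u m \<le> \<bar>t - u\<bar> + Rr m / L m) U" using r_le by simp
  qed
  have D_anti: "D p (p + 1/2) \<ge> 1/2" for p
    using tendsto_le[OF nb Dlim Klim] r_anti by simp
  have D_tri: "D a c \<le> D a b' + D b' c" for a b' c
    unfolding D_def by (rule cs_tri[OF U Llim xcs xcs xcs])
  have D_sym: "D a c = D c a" for a c
    unfolding D_def by (rule cs_sym[OF U Llim])
  have D_geo: "D (p + s') (p + t') = \<bar>s' - t'\<bar>" if "s' \<in> {0..1/2}" "t' \<in> {0..1/2}" for p s' t'
  proof -
    have *: "D (p + a) (p + c) = c - a" if "0 \<le> a" "a \<le> c" "c \<le> 1/2" for a c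
    proof -
      have "1/2 \<le> D p (p + 1/2)" by (rule D_anti)
      also have "\<dots> \<le> D p (p + a) + D (p + a) (p + 1/2)" by (rule D_tri)
      also have "D (p + a) (p + 1/2) \<le> D (p + a) (p + c) + D (p + c) (p + 1/2)" by (rule D_tri)
      moreover have "D p (p + a) \<le> a" using D_le[of p "p + a"] that by simp
      moreover have "D (p + c) (p + 1/2) \<le> 1/2 - c" using D_le[of "p + c" "p + 1/2"] that by simp
      moreover have "D (p + a) (p + c) \<le> c - a" using D_le[of "p + a" "p + c"] that by simp
      ultimately show ?thesis by linarith
    qed
    show ?thesis
    proof (cases "s' \<le> t'")
      case True then show ?thesis using *[of s' t'] that by simp
    next
      case False then show ?thesis using *[of t' s'] that D_sym[of "p + s'" "p + t'"] by simp
    qed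
  qed
  define cls where "cls t = {w \<in> cone_seqs (x 0) L. cone_pdist U L (x t) w = 0}" for t
  define M where "M = cone_carrier U (x 0) L"
  define d :: "(nat \<Rightarrow> 'a) set \<Rightarrow> (nat \<Rightarrow> 'a) set \<Rightarrow> real" where "d = cone_dist U L"
  have clsM: "cls t \<in> M" for t
    unfolding M_def cone_carrier_def cls_def using xcs by blast
  have dD: "d (cls t) (cls u) = D t u" for t u
    unfolding d_def cls_def D_def by (rule cs_dist[OF U Llim xcs xcs])
  have cls10: "cls 1 = cls 0" unfolding cls_def x10 ..
  have cat: "CAT0 M d" using assms(3) U Llim unfolding asymptotically_CAT0_def M_def d_def by blast
  define P where "P = cls 0"
  define Q where "Q = cls (1/2)"
  have dPQ: "d P Q = 1/2" unfolding P_def Q_def dD using D_geo[of 0 "1/2" 0] by simp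
  have dQP: "d Q P = 1/2" unfolding P_def Q_def dD using D_geo[of 0 "1/2" 0] D_sym by simp
  have dQQ: "d Q Q = 0" unfolding Q_def dD using D_geo[where p="1/2" and s'=0 and t'=0] by simp
  define g1 where "g1 t = cls t" for t
  define g2 where "g2 t = Q" for t :: real
  define g3 where "g3 t = cls (1/2 + t)" for t
  have G1: "geodesic_between M d P Q g1"
    unfolding geodesic_between_def dPQ
  proof (intro conjI ballI)
    show "g1 ` {0..1/2} \<subseteq> M" unfolding g1_def using clsM by blast
    show "g1 0 = P" unfolding g1_def P_def ..
    show "g1 (1/2) = Q" unfolding g1_def Q_def ..
    fix s' t' :: real assume "s' \<in> {0..1/2}" "t' \<in> {0..1/2::real}"
    then show "d (g1 s') (g1 t') = \<bar>s' - t'\<bar>" unfolding g1_def dD using D_geo[of s' t' 0] by simp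
  qed
  have G3: "geodesic_between M d Q P g3"
    unfolding geodesic_between_def dQP
  proof (intro conjI ballI)
    show "g3 ` {0..1/2} \<subseteq> M" unfolding g3_def using clsM by blast
    show "g3 0 = Q" unfolding g3_def Q_def by simp
    show "g3 (1/2) = P" unfolding g3_def P_def using cls10 by simp
    fix s' t' :: real assume "s' \<in> {0..1/2}" "t' \<in> {0..1/2::real}"
    then show "d (g3 s') (g3 t') = \<bar>s' - t'\<bar>" unfolding g3_def dD using D_geo[of s' t' "1/2"] by simp
  qed
  have G2: "geodesic_between M d Q Q g2"
    unfolding geodesic_between_def dQQ g2_def using clsM Q_def by (auto simp: dQQ)
  obtain v :: "real^2" where v: "norm v = 1/2" using vector_choose_size[of "1/2"] by auto
  define xa :: "real^2" where "xa = 0"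
  define ya where "ya = v"
  have c2: "\<And>x y z g1 g2 g3 xa ya za. x \<in> M \<Longrightarrow> y \<in> M \<Longrightarrow> z \<in> M \<Longrightarrow>
      geodesic_between M d x y g1 \<Longrightarrow> geodesic_between M d y z g2 \<Longrightarrow> geodesic_between M d z x g3 \<Longrightarrow>
      dist xa ya = d x y \<Longrightarrow> dist ya za = d y z \<Longrightarrow> dist za xa = d z x \<Longrightarrow>
      CAT0_triangle_ineq d x y z g1 g2 g3 xa ya za"
    using cat unfolding CAT0_def by blast
  have dxy: "dist xa ya = d P Q" unfolding dPQ xa_def ya_def using v by (simp add: dist_norm)
  have dyx: "dist ya xa = d Q P" unfolding dQP xa_def ya_def using v by (simp add: dist_norm)
  have dyy: "dist ya ya = d Q Q" unfolding dQQ by simp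
  have PM: "P \<in> M" and QM: "Q \<in> M" unfolding P_def Q_def by (rule clsM)+
  have "CAT0_triangle_ineq d P Q Q g1 g2 g3 xa ya ya"
    by (rule c2[OF PM QM QM G1 G2 G3 dxy dyy dyx])
  then have tri: "\<forall>(c1, a1, b1, l1)\<in>{(g1, xa, ya, 1/2), (g2, ya, ya, 0), (g3, ya, xa, 1/2)}.
        \<forall>(c2, a2, b2, l2)\<in>{(g1, xa, ya, 1/2), (g2, ya, ya, 0), (g3, ya, xa, 1/2)}.
        \<forall>s\<in>{0..l1}. \<forall>t\<in>{0..l2}. d (c1 s) (c2 t) \<le> dist (cmp_pt a1 b1 l1 s) (cmp_pt a2 b2 l2 t)"
    unfolding CAT0_triangle_ineq_def Let_def dPQ dQP dQQ .
  have m1: "(g1, xa, ya, 1/2::real) \<in> {(g1, xa, ya, 1/2), (g2, ya, ya, 0), (g3, ya, xa, 1/2)}" by simp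
  have m3: "(g3, ya, xa, 1/2::real) \<in> {(g1, xa, ya, 1/2), (g2, ya, ya, 0), (g3, ya, xa, 1/2)}" by simp
  have "\<forall>(c2, a2, b2, l2)\<in>{(g1, xa, ya, 1/2), (g2, ya, ya, 0), (g3, ya, xa, 1/2)}.
        \<forall>s\<in>{0..1/2}. \<forall>t\<in>{0..l2}. d (g1 s) (c2 t) \<le> dist (cmp_pt xa ya (1/2) s) (cmp_pt a2 b2 l2 t)"
    using bspec[OF tri m1] by simp
  from bspec[OF this m3]
  have "\<forall>s\<in>{0..1/2}. \<forall>t\<in>{0..1/2}. d (g1 s) (g3 t) \<le> dist (cmp_pt xa ya (1/2) s) (cmp_pt ya xa (1/2) t)"
    by simp
  then have "d (g1 (1/4)) (g3 (1/4)) \<le> dist (cmp_pt xa ya (1/2) (1/4)) (cmp_pt ya xa (1/2) (1/4))"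
    by simp
  also have "cmp_pt xa ya (1/2) (1/4) = cmp_pt ya xa (1/2) (1/4)"
  proof -
    have e1: "cmp_pt xa ya (1/2) (1/4) = (1/2::real) *\<^sub>R ya" unfolding cmp_pt_def xa_def by simp
    have e2: "cmp_pt ya xa (1/2) (1/4) = ya - (1/2::real) *\<^sub>R ya" unfolding cmp_pt_def xa_def by simp
    have e3: "ya - (1/2::real) *\<^sub>R ya = (1/2::real) *\<^sub>R ya"
      using scaleR_add_left[of "1/2::real" "1/2" ya] by (simp add: eq_diff_eq)
    show ?thesis unfolding e1 e2 e3 ..
  qed
  finally have "d (g1 (1/4)) (g3 (1/4)) \<le> 0" by simp
  moreover have "d (g1 (1/4)) (g3 (1/4)) = D (1/4) (1/4 + 1/2)"
    unfolding g1_def g3_def dD by (simp add: add.commute)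
  moreover have "D (1/4) (1/4 + 1/2) \<ge> 1/2" by (rule D_anti)
  ultimately show False by simp
qed

end
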